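(* For all integers $n,p\ge1$, constants $R_x>0$, $R_\theta>0$, $c_0>0$, privacy parameters $0<\epsilon<2$, $0<\delta<1$, and any fixed no-reply distribution $\pi_\perp$ on $\mathbb{R}^p$, the output $\tilde\theta_\gamma$ of the ePTR linear regression algorithm is $(\epsilon,\delta)$-differentially private.
   Context: Datasets are $n$-tuples $\mathcal{X}=((x_1,y_1),\dots,(x_n,y_n))$ with $x_i\in\mathbb{R}^p$, $y_i\in\mathbb{R}$; $D_H(\mathcal{X},\mathcal{X}')$ is the number of indices where the pairs differ, and $\mathcal{X},\mathcal{X}'$ are neighbors if $D_H=1$. A randomized map $A$ is $(\epsilon,\delta)$-DP if $P(A(\mathcal{X})\in\mathcal{B})\le e^{\epsilon}P(A(\mathcal{X}')\in\mathcal{B})+\delta$ for all neighbors and all measurable $\mathcal{B}$. For $R>0$ and a vector (or scalar) $x$, $\Pi_R(x)=\frac{R\,x}{\max\{\|x\|,R\}}$. Efficient PTR (ePTR): fix $q$, a map $\hat\theta$ into $\mathbb{R}^q$, a level $\alpha>0$, a function $\gamma$ from datasets to $[0,\infty)$, $\epsilon>0$, $\delta\in(0,1)$, and a fixed probability distribution $\pi_\perp$ on $\mathbb{R}^q$. Let $M=1+\frac{2}{\epsilon}\log\max\{1/\delta,1/\epsilon\}$ and $p(\mathcal{X})=\frac{\exp(\frac12\epsilon(\gamma(\mathcal{X})-M))}{\exp(\frac12\epsilon(\gamma(\mathcal{X})-M))+1}$. On input $\mathcal{X}$, draw independently $I\sim\mathrm{Bernoulli}(p(\mathcal{X}))$,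 $\zeta\sim\mathcal{N}(0,I_q)$, $W\sim\pi_\perp$, and output $\hat\theta(\mathcal{X})+\frac{2\alpha}{\epsilon}\sqrt{2\log(1.25/\delta)}\,\zeta$ if $I=1$ and $W$ if $I=0$. ePTR linear regression algorithm: (1) replace $x_i$ by $\Pi_{R_x}(x_i)$ and $y_i$ by $\Pi_{R_xR_\theta}(y_i)$ (clipping to $[-R_xR_\theta,R_xR_\theta]$); (2) let $X\in\mathbb{R}^{p\times n}$ have columns $x_i$ and $Y=(y_1,\dots,y_n)^\top$, and set $\hat\theta=\Pi_{R_\theta}\big((XX^\top)^{-1}XY\big)$ if $XX^\top$ is invertible and $\hat\theta=0$ otherwise; (3) apply ePTR (with $q=p$) to $\hat\theta$ with $\gamma(\mathcal{X})=\frac{1}{2R_x^2}\max\{\lambda_{\min}(XX^\top)-c_0n-2R_x^2,\,0\}$ and $\alpha=\frac{8R_x^2R_\theta}{nc_0}$, and output the result $\tilde\theta_\gamma$. *)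

theory Defs
  imports "HOL-Probability.Probability"
begin

(* Pi_R(x) = R x / max(norm x, R); for reals norm = abs, so this is clipping to [-R,R] *)
definition clipR :: "real \<Rightarrow> 'a::real_normed_vector \<Rightarrow> 'a" where
  "clipR R x = (R / max (norm x) R) *\<^sub>R x"

type_synonym 'p dataset = "((real^'p::finite) \<times> real) list"

definition hamming :: "'a list \<Rightarrow> 'a list \<Rightarrow> nat" where
  "hamming D D' = card {i. i < length D \<and> D ! i \<noteq> D' ! i}"

definition neighbors :: "'a list \<Rightarrow> 'a list \<Rightarrow> bool" where
  "neighbors D D' \<longleftrightarrow> length D = length D' \<and> hamming D D' = 1"

definition is_DP :: "real \<Rightarrow> real \<Rightarrow> nat \<Rightarrow> ('a list \<Rightarrow> 'b measure) \<Rightarrow> bool" where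
  "is_DP \<epsilon> \<delta> n A \<longleftrightarrow>
     (\<forall>D D'. length D = n \<longrightarrow> neighbors D D' \<longrightarrow>
        (\<forall>B \<in> sets (A D). measure (A D) B \<le> exp \<epsilon> * measure (A D') B + \<delta>))"

definition std_gauss :: "(real^'q) measure" where
  "std_gauss = density lborel (\<lambda>z. ennreal (\<Prod>i\<in>UNIV. std_normal_density (z $ i)))"

definition ePTR_M :: "real \<Rightarrow> real \<Rightarrow> real" where
  "ePTR_M \<epsilon> \<delta> = 1 + (2 / \<epsilon>) * ln (max (1 / \<delta>) (1 / \<epsilon>))"

definition ePTR_prob :: "real \<Rightarrow> real \<Rightarrow> real \<Rightarrow> real" where
  "ePTR_prob \<epsilon> \<delta> g =
     exp (\<epsilon> / 2 * (g - ePTR_M \<epsilon> \<delta>)) / (exp (\<epsilon> / 2 * (g - ePTR_M \<epsilon> \<delta>)) + 1)"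

definition ePTR ::
  "('d \<Rightarrow> real^'q) \<Rightarrow> real \<Rightarrow> ('d \<Rightarrow> real) \<Rightarrow> real \<Rightarrow> real \<Rightarrow> (real^'q) measure
     \<Rightarrow> 'd \<Rightarrow> (real^'q) measure" where
  "ePTR \<theta> \<alpha> \<gamma> \<epsilon> \<delta> \<pi>perp D =
     bind (measure_pmf (bernoulli_pmf (ePTR_prob \<epsilon> \<delta> (\<gamma> D))))
       (\<lambda>I. if I then distr std_gauss borel
                   (\<lambda>z. \<theta> D + ((2 * \<alpha> / \<epsilon>) * sqrt (2 * ln (1.25 / \<delta>))) *\<^sub>R z)
            else \<pi>perp)"

definition clip_data :: "real \<Rightarrow> real \<Rightarrow> ('p::finite) dataset \<Rightarrow> 'p dataset" where
  "clip_data Rx R\<theta> D = map (\<lambda>(x, y). (clipR Rx x, clipR (Rx * R\<theta>) y)) D"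

definition outer :: "real^'p \<Rightarrow> real^'p \<Rightarrow> real^'p^'p" where
  "outer x y = (\<chi> i j. x $ i * y $ j)"

(* X X^T = sum_i x_i x_i^T *)
definition gram :: "'p dataset \<Rightarrow> real^'p^'p" where
  "gram D = sum_list (map (\<lambda>(x, y). outer x x) D)"

(* X Y = sum_i y_i x_i *)
definition xy :: "'p dataset \<Rightarrow> real^'p" where
  "xy D = sum_list (map (\<lambda>(x, y). y *\<^sub>R x) D)"

definition lambda_min :: "real^'p^'p \<Rightarrow> real" where
  "lambda_min A = Min {l. \<exists>v. v \<noteq> 0 \<and> A *v v = l *\<^sub>R v}"

definition theta_hat :: "real \<Rightarrow> real \<Rightarrow> ('p::finite) dataset \<Rightarrow> real^'p" where
  "theta_hat Rx R\<theta> D =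
     (let C = clip_data Rx R\<theta> D; G = gram C in
      if invertible G then clipR R\<theta> (matrix_inv G *v xy C) else 0)"

definition gamma_lr :: "real \<Rightarrow> real \<Rightarrow> real \<Rightarrow> ('p::finite) dataset \<Rightarrow> real" where
  "gamma_lr Rx R\<theta> c0 D =
     (let G = gram (clip_data Rx R\<theta> D) in
      (1 / (2 * Rx\<^sup>2)) * max (lambda_min G - c0 * real (length D) - 2 * Rx\<^sup>2) 0)"

definition ePTR_linreg ::
  "nat \<Rightarrow> real \<Rightarrow> real \<Rightarrow> real \<Rightarrow> real \<Rightarrow> real \<Rightarrow> (real^'p) measure
     \<Rightarrow> ('p::finite) dataset \<Rightarrow> (real^'p) measure" where
  "ePTR_linreg n Rx R\<theta> c0 \<epsilon> \<delta> \<pi>perp =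
     ePTR (theta_hat Rx R\<theta>) (8 * Rx\<^sup>2 * R\<theta> / (real n * c0)) (gamma_lr Rx R\<theta> c0) \<epsilon> \<delta> \<pi>perp"

end

theory Submission
  imports Defs
begin


lemma sym_inner:
  fixes A :: "real^'p^'p"
  assumes "transpose A = A"
  shows "(A *v v) \<bullet> w = v \<bullet> (A *v w)"
proof -
  have "v \<bullet> (A *v w) = (v v* A) \<bullet> w" by (simp add: dot_lmul_matrix)
  also have "v v* A = transpose A *v v" by simp
  finally show ?thesis using assms by simp
qed

lemma quad_zero:
  fixes b c :: real
  assumes "\<And>t. 0 \<le> 2*t*b + t^2*c" and "c \<ge> 0"
  shows "b = 0"
proof (rule ccontr)
  assume "b \<noteq> 0"
  define t where "t = - b / (c + 1)"
  have "0 \<le> 2*t*b + t^2*c" by (rule assms)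
  also have "2*t*b + t^2*c = b^2 * (-c - 2) / (c+1)^2"
  proof -
    have "c + 1 \<noteq> 0" using assms(2) by simp
    then show ?thesis unfolding t_def power2_eq_square
      by (simp add: divide_simps) (simp add: algebra_simps)
  qed
  also have "\<dots> < 0" using \<open>b \<noteq> 0\<close> assms(2)
    by (intro divide_neg_pos mult_pos_neg) auto
  finally show False by simp
qed

lemma cont_quad: "continuous_on S (\<lambda>v::real^'p. v \<bullet> (A *v v))"
  unfolding matrix_vector_mult_def
  by (intro continuous_intros)

lemma quad_expand:
  fixes A :: "real^'p^'p"
  assumes "transpose A = A"
  shows "(u + t *\<^sub>R w) \<bullet> (A *v (u + t *\<^sub>R w)) = u \<bullet> (A *v u) + 2*t*(w \<bullet> (A *v u)) + t^2 * (w \<bullet> (A *v w))"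
proof -
  have "u \<bullet> (A *v w) = w \<bullet> (A *v u)" using sym_inner[OF assms, of u w] by (simp add: inner_commute)
  then show ?thesis
    by (simp add: matrix_vector_right_distrib matrix_vector_mult_scaleR inner_add_left inner_add_right
        algebra_simps power2_eq_square)
qed

lemma rayleigh_exists:
  fixes A :: "real^'p^'p"
  assumes sym: "transpose A = A"
  shows "\<exists>\<mu> u. norm u = 1 \<and> A *v u = \<mu> *\<^sub>R u \<and> (\<forall>v. \<mu> * (norm v)^2 \<le> v \<bullet> (A *v v))"
proof -
  have "sphere (0::real^'p) 1 \<noteq> {}"
    using vector_choose_size[of 1, where 'a="real^'p"] by auto
  then obtain u where u: "u \<in> sphere 0 1" and umin: "\<And>y. y \<in> sphere 0 1 \<Longrightarrow> u \<bullet> (A *v u) \<le> y \<bullet> (A *v y)"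
    using continuous_attains_inf[OF compact_sphere _ cont_quad] by blast
  define \<mu> where "\<mu> = u \<bullet> (A *v u)"
  have nu: "norm u = 1" using u by simp
  have ge: "\<mu> * (norm v)^2 \<le> v \<bullet> (A *v v)" for v
  proof (cases "v = 0")
    case True then show ?thesis by simp
  next
    case False
    define w where "w = (1 / norm v) *\<^sub>R v"
    have "w \<in> sphere 0 1" using False by (simp add: w_def)
    then have "\<mu> \<le> w \<bullet> (A *v w)" using umin \<mu>_def by blast
    also have "w \<bullet> (A *v w) = (v \<bullet> (A *v v)) / (norm v)^2"
      by (simp add: w_def matrix_vector_mult_scaleR power2_eq_square)
    finally show ?thesis using False by (simp add: field_simps)
  qed
  define h where "h = A *v u - \<mu> *\<^sub>R u"
  have hz: "w \<bullet> h = 0" for w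
  proof (rule quad_zero)
    show "0 \<le> 2*t*(w \<bullet> h) + t^2*(w \<bullet> (A *v w) - \<mu> * (norm w)^2)" for t
    proof -
      have "\<mu> * (norm (u + t *\<^sub>R w))^2 \<le> (u + t *\<^sub>R w) \<bullet> (A *v (u + t *\<^sub>R w))" by (rule ge)
      moreover have "(norm (u + t *\<^sub>R w))^2 = 1 + 2*t*(w \<bullet> u) + t^2 * (norm w)^2"
      proof -
        have "u \<bullet> u = 1" using nu by (simp add: dot_square_norm)
        then show ?thesis unfolding power2_norm_eq_inner
          by (simp add: inner_add_left inner_add_right inner_commute algebra_simps power2_eq_square)
      qed
      moreover have "u \<bullet> (A *v u) = \<mu>" by (simp add: \<mu>_def)
      ultimately show ?thesis unfolding quad_expand[OF sym] h_def
        by (simp add: inner_diff_right algebra_simps)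
    qed
    show "0 \<le> w \<bullet> (A *v w) - \<mu> * (norm w)^2" using ge[of w] by simp
  qed
  have "h = 0" using hz[of h] by simp
  then show ?thesis using nu by (intro exI[of _ \<mu>] exI[of _ u]) (auto simp: h_def ge)
qed

lemma eig_finite:
  fixes A :: "real^'p^'p"
  assumes sym: "transpose A = A"
  shows "finite {l. \<exists>v. v \<noteq> 0 \<and> A *v v = l *\<^sub>R v}" (is "finite ?S")
proof -
  define f where "f l = (SOME v. v \<noteq> 0 \<and> A *v v = l *\<^sub>R v)" for l
  have f: "f l \<noteq> 0 \<and> A *v f l = l *\<^sub>R f l" if "l \<in> ?S" for l
  proof -
    from that obtain v where "v \<noteq> 0 \<and> A *v v = l *\<^sub>R v" unfolding mem_Collect_eq by (elim exE)
    then show ?thesis unfolding f_def by (rule someI)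
  qed
  have orth: "f l \<bullet> f l' = 0" if "l \<in> ?S" "l' \<in> ?S" "l \<noteq> l'" for l l'
  proof -
    have "l * (f l \<bullet> f l') = (A *v f l) \<bullet> f l'" using f[OF that(1)] by (simp only: inner_scaleR_left)
    also have "\<dots> = f l \<bullet> (A *v f l')" by (rule sym_inner[OF sym])
    also have "\<dots> = l' * (f l \<bullet> f l')" using f[OF that(2)] by (simp only: inner_scaleR_right)
    finally show ?thesis using that(3) by simp
  qed
  have inj: "inj_on f ?S"
  proof (rule inj_onI)
    fix l l' assume ll: "l \<in> ?S" "l' \<in> ?S" "f l = f l'"
    show "l = l'"
    proof (rule ccontr)
      assume "l \<noteq> l'"
      then have "f l \<bullet> f l' = 0" using orth ll(1,2) by blast
      then have "f l \<bullet> f l = 0" using ll(3) by simp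
      then show False using f[OF ll(1)] by simp
    qed
  qed
  have "pairwise orthogonal (f ` ?S)"
  proof (unfold pairwise_def, intro ballI impI)
    fix a b assume "a \<in> f ` ?S" "b \<in> f ` ?S" "a \<noteq> b"
    then obtain l l' where "l \<in> ?S" "l' \<in> ?S" "a = f l" "b = f l'" by blast
    moreover have "l \<noteq> l'" using \<open>a \<noteq> b\<close> calculation by blast
    ultimately show "orthogonal a b" unfolding orthogonal_def using orth by simp
  qed
  moreover have "0 \<notin> f ` ?S"
  proof
    assume "0 \<in> f ` ?S"
    then obtain l where "0 = f l" "l \<in> ?S" by (rule imageE)
    then show False using f[OF \<open>l \<in> ?S\<close>] by simp
  qed
  ultimately have ind: "independent (f ` ?S)" by (rule pairwise_orthogonal_independent)
  have "finite (f ` ?S)" using independent_bound[OF ind] by simp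
  then show ?thesis using finite_imageD[OF _ inj] by simp
qed

lemma lambda_min_props:
  fixes A :: "real^'p^'p"
  assumes sym: "transpose A = A"
  shows "\<exists>u. norm u = 1 \<and> A *v u = lambda_min A *\<^sub>R u" 
    and "lambda_min A * (norm v)^2 \<le> v \<bullet> (A *v v)"
proof -
  obtain \<mu> u where u: "norm u = 1" "A *v u = \<mu> *\<^sub>R u" and ge: "\<And>v. \<mu> * (norm v)^2 \<le> v \<bullet> (A *v v)"
    using rayleigh_exists[OF sym] by blast
  have "lambda_min A = \<mu>"
    unfolding lambda_min_def
  proof (rule Min_eqI[OF eig_finite[OF sym]])
    show "\<mu> \<in> {l. \<exists>v. v \<noteq> 0 \<and> A *v v = l *\<^sub>R v}" using u by (intro CollectI exI[of _ u]) auto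
    fix l assume "l \<in> {l. \<exists>v. v \<noteq> 0 \<and> A *v v = l *\<^sub>R v}"
    then obtain v where v: "v \<noteq> 0" "A *v v = l *\<^sub>R v" by blast
    have "\<mu> * (norm v)^2 \<le> l * (norm v)^2" using ge[of v] v by (simp add: power2_norm_eq_inner)
    then show "\<mu> \<le> l" using v by simp
  qed
  then show "\<exists>u. norm u = 1 \<and> A *v u = lambda_min A *\<^sub>R u" "lambda_min A * (norm v)^2 \<le> v \<bullet> (A *v v)"
    using u ge by auto
qed

lemma lambda_min_ge:
  fixes A :: "real^'p^'p"
  assumes sym: "transpose A = A" and "\<And>v. m * (norm v)^2 \<le> v \<bullet> (A *v v)"
  shows "m \<le> lambda_min A"
proof -
  obtain u where u: "norm u = 1" "A *v u = lambda_min A *\<^sub>R u" using lambda_min_props(1)[OF sym] by blast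
  have "m * (norm u)^2 \<le> u \<bullet> (A *v u)" by (rule assms(2))
  also have "\<dots> = lambda_min A"
  proof -
    have "u \<bullet> u = 1" using u(1) by (simp add: dot_square_norm)
    then show ?thesis using u(2) by simp
  qed
  finally show ?thesis using u by simp
qed

lemma lambda_min_norm:
  fixes A :: "real^'p^'p"
  assumes sym: "transpose A = A" and pos: "lambda_min A \<ge> 0"
  shows "lambda_min A * norm v \<le> norm (A *v v)"
proof (cases "v = 0")
  case False
  have "lambda_min A * (norm v)^2 \<le> v \<bullet> (A *v v)" by (rule lambda_min_props(2)[OF sym])
  also have "\<dots> \<le> norm v * norm (A *v v)" by (rule norm_cauchy_schwarz)
  finally show ?thesis using False by (simp add: power2_eq_square)
qed simp

lemma lambda_min_invertible:
  fixes A :: "real^'p^'p"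
  assumes sym: "transpose A = A" and pos: "lambda_min A > 0"
  shows "invertible A"
proof -
  have "\<forall>x. A *v x = 0 \<longrightarrow> x = 0"
  proof (intro allI impI)
    fix x assume "A *v x = 0"
    then have "lambda_min A * norm x \<le> 0" using lambda_min_norm[OF sym, of x] pos by simp
    then have "norm x \<le> 0" using pos by (simp add: mult_le_0_iff)
    then show "x = 0" by simp
  qed
  then show ?thesis using invertible_left_inverse matrix_left_invertible_ker by blast
qed

lemma matrix_inv_works:
  fixes A :: "real^'p^'p"
  assumes "invertible A"
  shows "A *v (matrix_inv A *v b) = b"
proof -
  have "A ** matrix_inv A = mat 1"
  proof -
    obtain A' where "A ** A' = mat 1 \<and> A' ** A = mat 1" using assms unfolding invertible_def by blast
    then have "A ** matrix_inv A = mat 1 \<and> matrix_inv A ** A = mat 1"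
      unfolding matrix_inv_def by (rule someI)
    then show ?thesis by simp
  qed
  then show ?thesis by (simp add: matrix_vector_mul_assoc)
qed



lemma outer_mult: "outer x x *v v = (x \<bullet> v) *\<^sub>R x"
  by (simp add: vec_eq_iff outer_def matrix_vector_mult_def inner_vec_def sum_distrib_left algebra_simps)

lemma outer_transpose: "transpose (outer x x) = outer x x"
  by (simp add: vec_eq_iff outer_def transpose_def mult.commute)

lemma transpose_add': "transpose (A + B) = transpose A + transpose (B::real^'n^'n)"
  by (simp add: vec_eq_iff transpose_def)

lemma gram_Cons: "gram (a # C) = outer (fst a) (fst a) + gram C"
  by (cases a) (simp add: gram_def)

lemma xy_Cons: "xy (a # C) = snd a *\<^sub>R fst a + xy C"
  by (cases a) (simp add: xy_def)

lemma gram_sym: "transpose (gram C) = gram C"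
  by (induction C) (simp_all add: gram_Cons transpose_add' outer_transpose, simp add: gram_def vec_eq_iff transpose_def)

lemma sum_list_upd:
  fixes xs :: "'a::ab_group_add list"
  shows "k < length xs \<Longrightarrow> sum_list (xs[k := a]) = sum_list xs + a - xs ! k"
proof (induction xs arbitrary: k)
  case (Cons x xs)
  then show ?case by (cases k) (auto simp: algebra_simps)
qed simp

lemma gram_update:
  assumes "k < length C"
  shows "gram (C[k := a]) = gram C + outer (fst a) (fst a) - outer (fst (C!k)) (fst (C!k))"
  using assms unfolding gram_def
  by (simp add: map_update sum_list_upd split_beta)

lemma xy_update:
  assumes "k < length C"
  shows "xy (C[k := a]) = xy C + snd a *\<^sub>R fst a - snd (C!k) *\<^sub>R fst (C!k)"
  using assms unfolding xy_def
  by (simp add: map_update sum_list_upd split_beta)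

lemma clipR_norm:
  assumes "R > 0"
  shows "norm (clipR R x) \<le> R"
proof -
  have "norm (clipR R x) = R / max (norm x) R * norm x"
    using assms by (simp add: clipR_def)
  also have "\<dots> \<le> R" using assms by (simp add: field_simps max_def)
  finally show ?thesis .
qed

lemma clipR_lip:
  fixes a b :: "'a::real_normed_vector"
  assumes R: "R > 0"
  shows "norm (clipR R a - clipR R b) \<le> 2 * R * norm (a - b) / max (norm b) R"
proof -
  define M where "M = max (norm b) R"
  define Ma where "Ma = max (norm a) R"
  have M: "M > 0" "Ma > 0" "norm a \<le> Ma" using R by (auto simp: M_def Ma_def)
  have "clipR R a - clipR R b = (R / M) *\<^sub>R (a - b) + (R * (1/Ma - 1/M)) *\<^sub>R a"
    unfolding clipR_def M_def[symmetric] Ma_def[symmetric]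
    by (simp add: algebra_simps divide_inverse)
  then have "norm (clipR R a - clipR R b) \<le> R / M * norm (a - b) + R * \<bar>1/Ma - 1/M\<bar> * norm a"
    using R M by (metis (no_types, lifting) abs_of_pos divide_pos_pos less_eq_real_def norm_scaleR norm_triangle_ineq abs_mult)
  also have "R * \<bar>1/Ma - 1/M\<bar> * norm a \<le> R / M * norm (a - b)"
  proof -
    have "\<bar>1/Ma - 1/M\<bar> = \<bar>M - Ma\<bar> / (Ma * M)" using M by (simp add: field_simps)
    have "\<bar>M - Ma\<bar> \<le> norm (a - b)"
      unfolding M_def Ma_def using norm_triangle_ineq3[of a b] norm_triangle_ineq3[of b a]
      by (simp add: norm_minus_commute max_def abs_le_iff)
    have "\<bar>1/Ma - 1/M\<bar> * norm a \<le> \<bar>1/Ma - 1/M\<bar> * Ma" using M by (intro mult_left_mono) auto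
    also have "\<dots> = \<bar>M - Ma\<bar> / M" using M \<open>\<bar>1/Ma - 1/M\<bar> = \<bar>M - Ma\<bar> / (Ma * M)\<close> by simp
    also have "\<dots> \<le> norm (a - b) / M" using M \<open>\<bar>M - Ma\<bar> \<le> norm (a - b)\<close> by (simp add: divide_right_mono)
    finally have "\<bar>1/Ma - 1/M\<bar> * norm a \<le> norm (a - b) / M" .
    then have "R * (\<bar>1/Ma - 1/M\<bar> * norm a) \<le> R * (norm (a - b) / M)"
      using R by (intro mult_left_mono) auto
    then show ?thesis by (simp add: mult.assoc)
  qed
  finally show ?thesis by (simp add: M_def)
qed



definition thc :: "real \<Rightarrow> ('p::finite) dataset \<Rightarrow> real^'p" where
  "thc R\<theta> C = (if invertible (gram C) then clipR R\<theta> (matrix_inv (gram C) *v xy C) else 0)"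

lemma theta_hat_thc: "theta_hat Rx R\<theta> D = thc R\<theta> (clip_data Rx R\<theta> D)"
  by (simp add: theta_hat_def thc_def Let_def)

definition bdd :: "real \<Rightarrow> real \<Rightarrow> ((real^'p::finite) \<times> real) \<Rightarrow> bool" where
  "bdd Rx R\<theta> a \<longleftrightarrow> norm (fst a) \<le> Rx \<and> \<bar>snd a\<bar> \<le> Rx * R\<theta>"

lemma clip_bdd:
  assumes "Rx > 0" "R\<theta> > 0" "a \<in> set (clip_data Rx R\<theta> D)"
  shows "bdd Rx R\<theta> a"
proof -
  obtain d where "d \<in> set D" "a = (clipR Rx (fst d), clipR (Rx*R\<theta>) (snd d))"
    using assms(3) unfolding clip_data_def by (auto simp: split_beta)
  then show ?thesis unfolding bdd_def using clipR_norm[of Rx "fst d"] clipR_norm[of "Rx*R\<theta>" "snd d"] assms(1,2)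
    by simp
qed

lemma gram_upd_mult:
  assumes "k < length C"
  shows "gram (C[k := a]) *v v = gram C *v v + (fst a \<bullet> v) *\<^sub>R fst a - (fst (C!k) \<bullet> v) *\<^sub>R fst (C!k)"
  using assms by (simp add: gram_update matrix_vector_mult_add_rdistrib matrix_vector_mult_diff_rdistrib outer_mult)

lemma sq_le: 
  assumes "norm (x::real^'p) \<le> Rx"
  shows "(x \<bullet> v)^2 \<le> Rx^2 * (norm v)^2"
proof -
  have "\<bar>x \<bullet> v\<bar> \<le> norm x * norm v" by (rule Cauchy_Schwarz_ineq2)
  also have "\<dots> \<le> Rx * norm v" using assms by (simp add: mult_right_mono)
  finally have "\<bar>x \<bullet> v\<bar> \<le> Rx * norm v" .
  then have "\<bar>x \<bullet> v\<bar>^2 \<le> (Rx * norm v)^2" by (rule power_mono) simp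
  then show ?thesis by (simp add: power_mult_distrib)
qed

lemma lmin_upd:
  assumes "k < length C" "norm (fst (C!k)) \<le> Rx"
  shows "lambda_min (gram C) - Rx^2 \<le> lambda_min (gram (C[k := a]))"
proof (rule lambda_min_ge[OF gram_sym])
  fix v :: "real^'a"
  have "v \<bullet> (gram (C[k := a]) *v v) = v \<bullet> (gram C *v v) + (fst a \<bullet> v)^2 - (fst (C!k) \<bullet> v)^2"
    using assms(1) by (simp add: gram_upd_mult inner_diff_right inner_add_right inner_commute power2_eq_square)
  moreover have "lambda_min (gram C) * (norm v)^2 \<le> v \<bullet> (gram C *v v)"
    by (rule lambda_min_props(2)[OF gram_sym])
  moreover have "(fst (C!k) \<bullet> v)^2 \<le> Rx^2 * (norm v)^2" by (rule sq_le[OF assms(2)])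
  moreover have "0 \<le> (fst a \<bullet> v)^2" by simp
  moreover have "(lambda_min (gram C) - Rx^2) * (norm v)^2 = lambda_min (gram C) * (norm v)^2 - Rx^2 * (norm v)^2"
    by (simp add: left_diff_distrib)
  ultimately show "(lambda_min (gram C) - Rx^2) * (norm v)^2 \<le> v \<bullet> (gram (C[k := a]) *v v)"
    by linarith
qed

lemma sensitivity:
  assumes Rx: "Rx > 0" and Rt: "R\<theta> > 0" and k: "k < length C"
    and bC: "\<And>c. c \<in> set C \<Longrightarrow> bdd Rx R\<theta> c" and ba: "bdd Rx R\<theta> a"
    and L: "L > 0" "L \<le> lambda_min (gram C)" and pos': "lambda_min (gram (C[k := a])) > 0"
  shows "norm (thc R\<theta> C - thc R\<theta> (C[k := a])) \<le> 8 * Rx^2 * R\<theta> / L"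
proof -
  define C' where "C' = C[k := a]"
  define G where "G = gram C"
  define G' where "G' = gram C'"
  have symG: "transpose G = G" and symG': "transpose G' = G'" by (simp_all add: G_def G'_def gram_sym)
  have invG: "invertible G" using lambda_min_invertible[OF symG] L by (simp add: G_def)
  have invG': "invertible G'" using lambda_min_invertible[OF symG'] pos' by (simp add: G'_def C'_def)
  define u where "u = matrix_inv G *v xy C"
  define u' where "u' = matrix_inv G' *v xy C'"
  have Gu: "G *v u = xy C" unfolding u_def by (rule matrix_inv_works[OF invG])
  have Gu': "G' *v u' = xy C'" unfolding u'_def by (rule matrix_inv_works[OF invG'])
  define x where "x = fst (C!k)"
  define y where "y = snd (C!k)"
  define x' where "x' = fst a"
  define y' where "y' = snd a"
  have bx: "norm x \<le> Rx" "\<bar>y\<bar> \<le> Rx * R\<theta>" using bC[of "C!k"] k unfolding bdd_def x_def y_def by auto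
  have bx': "norm x' \<le> Rx" "\<bar>y'\<bar> \<le> Rx * R\<theta>" using ba unfolding bdd_def x'_def y'_def by auto
  have G'v: "G' *v u' = G *v u' + (x' \<bullet> u') *\<^sub>R x' - (x \<bullet> u') *\<^sub>R x"
    unfolding G'_def G_def C'_def x_def x'_def using gram_upd_mult[OF k] by simp
  have b': "xy C' = xy C + y' *\<^sub>R x' - y *\<^sub>R x"
    unfolding C'_def x_def x'_def y_def y'_def using xy_update[OF k] by simp
  have key: "G *v (u - u') = (y - x \<bullet> u') *\<^sub>R x - (y' - x' \<bullet> u') *\<^sub>R x'"
  proof -
    have "G *v (u - u') = G *v u - G *v u'" by (simp add: matrix_vector_mult_diff_distrib)
    also have "\<dots> = xy C - (xy C' - (x' \<bullet> u') *\<^sub>R x' + (x \<bullet> u') *\<^sub>R x)"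
      using Gu Gu' G'v by (simp add: algebra_simps)
    also have "\<dots> = (y - x \<bullet> u') *\<^sub>R x - (y' - x' \<bullet> u') *\<^sub>R x'"
      using b' by (simp add: algebra_simps)
    finally show ?thesis .
  qed
  have t1: "norm ((y - x \<bullet> u') *\<^sub>R x) \<le> (Rx * R\<theta> + Rx * norm u') * Rx"
  proof -
    have "\<bar>x \<bullet> u'\<bar> \<le> norm x * norm u'" by (rule Cauchy_Schwarz_ineq2)
    also have "\<dots> \<le> Rx * norm u'" using bx by (simp add: mult_right_mono)
    finally have "\<bar>y - x \<bullet> u'\<bar> \<le> Rx * R\<theta> + Rx * norm u'" using bx by linarith
    then show ?thesis using bx Rx by (simp add: mult_mono')
  qed
  have t2: "norm ((y' - x' \<bullet> u') *\<^sub>R x') \<le> (Rx * R\<theta> + Rx * norm u') * Rx"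
  proof -
    have "\<bar>x' \<bullet> u'\<bar> \<le> norm x' * norm u'" by (rule Cauchy_Schwarz_ineq2)
    also have "\<dots> \<le> Rx * norm u'" using bx' by (simp add: mult_right_mono)
    finally have "\<bar>y' - x' \<bullet> u'\<bar> \<le> Rx * R\<theta> + Rx * norm u'" using bx' by linarith
    then show ?thesis using bx' Rx by (simp add: mult_mono')
  qed
  have "L * norm (u - u') \<le> lambda_min G * norm (u - u')"
    using L by (simp add: G_def mult_right_mono)
  also have "\<dots> \<le> norm (G *v (u - u'))" using lambda_min_norm[OF symG] L by (simp add: G_def)
  also have "\<dots> \<le> 2 * Rx^2 * (R\<theta> + norm u')"
    unfolding key using norm_triangle_ineq4[of "(y - x \<bullet> u') *\<^sub>R x" "(y' - x' \<bullet> u') *\<^sub>R x'"] t1 t2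
    by (simp add: algebra_simps power2_eq_square)
  finally have N: "L * norm (u - u') \<le> 2 * Rx^2 * (R\<theta> + norm u')" .
  define m where "m = max (norm u') R\<theta>"
  have m: "m > 0" "R\<theta> + norm u' \<le> 2 * m" using Rt by (auto simp: m_def)
  have "norm (thc R\<theta> C - thc R\<theta> C') = norm (clipR R\<theta> u - clipR R\<theta> u')"
    using invG invG' by (simp add: thc_def u_def u'_def G_def G'_def)
  also have "\<dots> \<le> 2 * R\<theta> * norm (u - u') / m" unfolding m_def by (rule clipR_lip[OF Rt])
  also have "\<dots> \<le> 8 * Rx^2 * R\<theta> / L"
  proof -
    have "norm (u - u') \<le> 2 * Rx^2 * (R\<theta> + norm u') / L" using N L by (simp add: field_simps)
    also have "\<dots> \<le> 2 * Rx^2 * (2 * m) / L" using m L by (intro divide_right_mono mult_left_mono) auto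
    finally have "2 * R\<theta> * norm (u - u') \<le> 2 * R\<theta> * (2 * Rx^2 * (2 * m) / L)" using Rt
      by (intro mult_left_mono) auto
    then show ?thesis using m L by (simp add: field_simps)
  qed
  finally show ?thesis by (simp add: C'_def)
qed



definition gd :: "real^'q \<Rightarrow> real" where
  "gd z = (\<Prod>i\<in>UNIV. std_normal_density (z $ i))"

lemma std_gauss_gd: "std_gauss = density lborel (\<lambda>z. ennreal (gd z))"
  by (simp add: std_gauss_def gd_def)

lemma gd_nonneg: "0 \<le> gd z"
  by (simp add: gd_def prod_nonneg)

lemma gd_cont: "continuous_on UNIV (gd :: real^'q \<Rightarrow> real)"
  unfolding gd_def[abs_def] std_normal_density_def
  by (intro continuous_intros) auto

lemma gd_meas[measurable]: "gd \<in> borel_measurable borel"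
  using gd_cont by (rule borel_measurable_continuous_onI)

lemma snd_shift: "std_normal_density (a - b) = std_normal_density a * exp (a * b - b^2 / 2)"
proof -
  have "exp (-((a - b)^2) / 2) = exp (-(a^2) / 2) * exp (a * b - b^2 / 2)"
    by (simp add: exp_add[symmetric] power2_eq_square field_simps)
  then show ?thesis by (simp add: std_normal_density_def)
qed

lemma gd_shift: "gd (z - v) = gd z * exp (z \<bullet> v - (norm v)^2 / 2)"
proof -
  have "gd (z - v) = (\<Prod>i\<in>UNIV. std_normal_density (z $ i) * exp (z$i * v$i - (v$i)^2 / 2))"
    by (simp add: gd_def snd_shift)
  also have "\<dots> = gd z * (\<Prod>i\<in>UNIV. exp (z$i * v$i - (v$i)^2 / 2))"
    by (simp add: gd_def prod.distrib)
  also have "(\<Prod>i\<in>UNIV. exp (z$i * v$i - (v$i)^2 / 2)) = exp (\<Sum>i\<in>UNIV. z$i * v$i - (v$i)^2 / 2)"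
    by (simp add: exp_sum)
  also have "(\<Sum>i\<in>UNIV. z$i * v$i - (v$i)^2 / 2) = z \<bullet> v - (norm v)^2 / 2"
  proof -
    have "(norm v)^2 = (\<Sum>i\<in>UNIV. (v$i)^2)"
      unfolding power2_norm_eq_inner inner_vec_def by (simp add: power2_eq_square)
    then show ?thesis by (simp add: inner_vec_def sum_subtractf sum_divide_distrib)
  qed
  finally show ?thesis .
qed

lemma nn_std_normal: "(\<integral>\<^sup>+x. ennreal (std_normal_density x) \<partial>lborel) = 1"
  by (subst nn_integral_eq_integral) auto

lemma gd_int: "(\<integral>\<^sup>+z. ennreal (gd (z::real^'q)) \<partial>lborel) = 1"
proof -
  have eq: "ennreal (gd z) = (\<Prod>b\<in>Basis. ennreal (std_normal_density (z \<bullet> b)))" for z :: "real^'q"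
  proof -
    have "ennreal (gd z) = (\<Prod>i\<in>UNIV. ennreal (std_normal_density (z $ i)))"
      unfolding gd_def by (simp add: prod_ennreal)
    also have "\<dots> = (\<Prod>i\<in>UNIV. ennreal (std_normal_density (z \<bullet> axis i 1)))"
      by (simp add: cart_eq_inner_axis)
    also have "\<dots> = (\<Prod>b\<in>Basis. ennreal (std_normal_density (z \<bullet> b)))"
      by (simp add: Basis_vec_def UNION_singleton_eq_range prod.reindex axis_eq_axis inj_on_def)
    finally show ?thesis .
  qed
  have "(\<integral>\<^sup>+z. ennreal (gd (z::real^'q)) \<partial>lborel) = (\<integral>\<^sup>+z. (\<Prod>b\<in>Basis. ennreal (std_normal_density ((z::real^'q) \<bullet> b))) \<partial>lborel)"
    by (simp add: eq)
  also have "\<dots> = (\<Prod>b\<in>(Basis::(real^'q) set). (\<integral>\<^sup>+x. ennreal (std_normal_density x) \<partial>lborel))"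
    by (rule nn_integral_lborel_prod) auto
  also have "\<dots> = 1" by (simp add: nn_std_normal)
  finally show ?thesis .
qed

lemma std_gauss_prob: "prob_space (std_gauss :: (real^'q) measure)"
proof
  have "emeasure (std_gauss :: (real^'q) measure) (space std_gauss) = (\<integral>\<^sup>+z. ennreal (gd (z::real^'q)) * indicator UNIV z \<partial>lborel)"
    unfolding std_gauss_gd by (subst emeasure_density) auto
  also have "\<dots> = 1" using gd_int by simp
  finally show "emeasure (std_gauss :: (real^'q) measure) (space std_gauss) = 1" .
qed

lemma sets_std_gauss[simp, measurable_cong]: "sets std_gauss = sets borel"
  by (simp add: std_gauss_gd)

lemma nn_translate:
  fixes c :: "real^'q"
  assumes [measurable]: "F \<in> borel_measurable borel"
  shows "(\<integral>\<^sup>+z. F (z + c) \<partial>lborel) = (\<integral>\<^sup>+z. F z \<partial>lborel)"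
proof -
  have "(\<integral>\<^sup>+z. F z \<partial>lborel) = (\<integral>\<^sup>+z. F z \<partial>(distr lborel borel ((+) c)))"
    by (simp add: lborel_distr_plus)
  also have "\<dots> = (\<integral>\<^sup>+z. F (c + z) \<partial>lborel)"
    by (subst nn_integral_distr) auto
  finally show ?thesis by (simp add: add.commute)
qed



lemma affine_meas[measurable]: "(\<lambda>z::real^'q. m + \<sigma> *\<^sub>R z) \<in> borel_measurable borel"
  by (intro borel_measurable_continuous_onI continuous_intros)

lemma emeasure_gauss:
  fixes m :: "real^'q"
  assumes B[measurable]: "B \<in> sets borel"
  shows "emeasure (distr std_gauss borel (\<lambda>z. m + \<sigma> *\<^sub>R z)) B
       = (\<integral>\<^sup>+z. ennreal (gd z * indicator B (m + \<sigma> *\<^sub>R z)) \<partial>lborel)"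
proof -
  have meas: "(\<lambda>z::real^'q. m + \<sigma> *\<^sub>R z) \<in> measurable std_gauss borel"
    using affine_meas by (simp add: measurable_cong_sets[OF sets_std_gauss refl])
  have pre: "(\<lambda>z::real^'q. m + \<sigma> *\<^sub>R z) -` B \<in> sets lborel"
    using affine_meas[of m \<sigma>] B by (simp add: measurable_sets_borel vimage_def)
  have "emeasure (distr std_gauss borel (\<lambda>z. m + \<sigma> *\<^sub>R z)) B
      = emeasure std_gauss ((\<lambda>z. m + \<sigma> *\<^sub>R z) -` B \<inter> space std_gauss)"
    by (rule emeasure_distr[OF meas B])
  also have "\<dots> = emeasure std_gauss ((\<lambda>z. m + \<sigma> *\<^sub>R z) -` B)"
    by (simp add: std_gauss_gd)
  also have "\<dots> = (\<integral>\<^sup>+z. ennreal (gd z) * indicator ((\<lambda>z. m + \<sigma> *\<^sub>R z) -` B) z \<partial>lborel)"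
    unfolding std_gauss_gd using pre by (subst emeasure_density) auto
  also have "\<dots> = (\<integral>\<^sup>+z. ennreal (gd z * indicator B (m + \<sigma> *\<^sub>R z)) \<partial>lborel)"
    by (intro nn_integral_cong) (auto split: split_indicator)
  finally show ?thesis .
qed

lemma gauss_bound:
  fixes m1 m2 :: "real^'q"
  assumes sig: "\<sigma> > 0" and eta: "\<eta> \<ge> 0" and dl: "\<delta>' \<ge> 0" and B[measurable]: "B \<in> sets borel"
    and tail: "(1/\<sigma>) *\<^sub>R (m1 - m2) \<noteq> 0 \<Longrightarrow>
        0 \<le> \<eta> - (norm ((1/\<sigma>) *\<^sub>R (m1 - m2)))^2/2 \<and>
        exp (- ((\<eta> - (norm ((1/\<sigma>) *\<^sub>R (m1 - m2)))^2/2)^2) / (2 * (norm ((1/\<sigma>) *\<^sub>R (m1 - m2)))^2)) \<le> \<delta>'"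
  shows "emeasure (distr std_gauss borel (\<lambda>z. m1 + \<sigma> *\<^sub>R z)) B
     \<le> ennreal (exp \<eta>) * emeasure (distr std_gauss borel (\<lambda>z. m2 + \<sigma> *\<^sub>R z)) B + ennreal \<delta>'"
proof -
  define u where "u = (1/\<sigma>) *\<^sub>R (m1 - m2)"
  have m1: "m1 = m2 + \<sigma> *\<^sub>R u" using sig by (simp add: u_def)
  define E where "E = {w::real^'q. \<eta> < w \<bullet> u - (norm u)^2/2}"
  have E[measurable]: "E \<in> sets borel"
  proof -
    have "open E" unfolding E_def by (intro open_Collect_less continuous_intros)
    then show ?thesis by simp
  qed
  have "emeasure (distr std_gauss borel (\<lambda>z. m1 + \<sigma> *\<^sub>R z)) B
      = (\<integral>\<^sup>+z. ennreal (gd z * indicator B (m1 + \<sigma> *\<^sub>R z)) \<partial>lborel)"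
    by (rule emeasure_gauss[OF B])
  also have "\<dots> = (\<integral>\<^sup>+w. ennreal (gd (w + (-u)) * indicator B (m1 + \<sigma> *\<^sub>R (w + (-u)))) \<partial>lborel)"
    by (rule nn_translate[symmetric]) measurable
  also have "\<dots> = (\<integral>\<^sup>+w. ennreal (gd (w - u) * indicator B (m2 + \<sigma> *\<^sub>R w)) \<partial>lborel)"
    by (simp add: m1 algebra_simps)
  also have "\<dots> \<le> (\<integral>\<^sup>+w. ennreal (exp \<eta> * (gd w * indicator B (m2 + \<sigma> *\<^sub>R w)) + gd (w - u) * indicator E w) \<partial>lborel)"
  proof (intro nn_integral_mono ennreal_leI)
    fix w :: "real^'q"
    have gw: "gd (w - u) = gd w * exp (w \<bullet> u - (norm u)^2 / 2)" by (rule gd_shift)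
    show "gd (w - u) * indicator B (m2 + \<sigma> *\<^sub>R w) \<le> exp \<eta> * (gd w * indicator B (m2 + \<sigma> *\<^sub>R w)) + gd (w - u) * indicator E w"
    proof (cases "w \<in> E")
      case True
      have "gd (w - u) * indicator B (m2 + \<sigma> *\<^sub>R w) \<le> gd (w - u)"
        using gd_nonneg[of "w - u"] by (simp split: split_indicator)
      moreover have "0 \<le> exp \<eta> * (gd w * indicator B (m2 + \<sigma> *\<^sub>R w))"
        using gd_nonneg[of w] by simp
      ultimately show ?thesis using True by simp
    next
      case False
      then have "exp (w \<bullet> u - (norm u)^2 / 2) \<le> exp \<eta>" by (simp add: E_def)
      then have "gd w * exp (w \<bullet> u - (norm u)^2 / 2) \<le> gd w * exp \<eta>"
        using gd_nonneg[of w] by (rule mult_left_mono)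
      then have "gd (w - u) * indicator B (m2 + \<sigma> *\<^sub>R w) \<le> exp \<eta> * (gd w * indicator B (m2 + \<sigma> *\<^sub>R w))"
        unfolding gw by (simp add: mult.commute split: split_indicator)
      then show ?thesis using False by simp
    qed
  qed
  also have "\<dots> = ennreal (exp \<eta>) * (\<integral>\<^sup>+w. ennreal (gd w * indicator B (m2 + \<sigma> *\<^sub>R w)) \<partial>lborel)
        + (\<integral>\<^sup>+w. ennreal (gd (w - u) * indicator E w) \<partial>lborel)"
  proof -
    have "(\<integral>\<^sup>+w. ennreal (exp \<eta> * (gd w * indicator B (m2 + \<sigma> *\<^sub>R w)) + gd (w - u) * indicator E w) \<partial>lborel)
        = (\<integral>\<^sup>+w. ennreal (exp \<eta>) * ennreal (gd w * indicator B (m2 + \<sigma> *\<^sub>R w)) + ennreal (gd (w - u) * indicator E w) \<partial>lborel)"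
    proof (intro nn_integral_cong)
      fix x :: "real^'q"
      have a: "0 \<le> gd x * indicator B (m2 + \<sigma> *\<^sub>R x)" "0 \<le> gd (x - u) * indicator E x"
        using gd_nonneg[of x] gd_nonneg[of "x - u"] by auto
      then have "0 \<le> exp \<eta> * (gd x * indicator B (m2 + \<sigma> *\<^sub>R x))" by simp
      then show "ennreal (exp \<eta> * (gd x * indicator B (m2 + \<sigma> *\<^sub>R x)) + gd (x - u) * indicator E x)
        = ennreal (exp \<eta>) * ennreal (gd x * indicator B (m2 + \<sigma> *\<^sub>R x)) + ennreal (gd (x - u) * indicator E x)"
        using a \<open>0 \<le> exp \<eta> * (gd x * indicator B (m2 + \<sigma> *\<^sub>R x))\<close>
        by (simp only: ennreal_plus ennreal_mult[OF less_imp_le[OF exp_gt_zero] a(1)])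
    qed
    also have "\<dots> = (\<integral>\<^sup>+w. ennreal (exp \<eta>) * ennreal (gd w * indicator B (m2 + \<sigma> *\<^sub>R w)) \<partial>lborel)
        + (\<integral>\<^sup>+w. ennreal (gd (w - u) * indicator E w) \<partial>lborel)"
      by (rule nn_integral_add) measurable
    also have "(\<integral>\<^sup>+w. ennreal (exp \<eta>) * ennreal (gd w * indicator B (m2 + \<sigma> *\<^sub>R w)) \<partial>lborel)
        = ennreal (exp \<eta>) * (\<integral>\<^sup>+w. ennreal (gd w * indicator B (m2 + \<sigma> *\<^sub>R w)) \<partial>lborel)"
      by (rule nn_integral_cmult) measurable
    finally show ?thesis .
  qed
  also have "(\<integral>\<^sup>+w. ennreal (gd w * indicator B (m2 + \<sigma> *\<^sub>R w)) \<partial>lborel)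
      = emeasure (distr std_gauss borel (\<lambda>z. m2 + \<sigma> *\<^sub>R z)) B"
    by (rule emeasure_gauss[OF B, symmetric])
  also have "(\<integral>\<^sup>+w. ennreal (gd (w - u) * indicator E w) \<partial>lborel) \<le> ennreal \<delta>'"
  proof -
    have "(\<integral>\<^sup>+w. ennreal (gd (w - u) * indicator E w) \<partial>lborel)
        = (\<integral>\<^sup>+z. ennreal (gd (z + u - u) * indicator E (z + u)) \<partial>lborel)"
      by (rule nn_translate[symmetric]) measurable
    also have "\<dots> = (\<integral>\<^sup>+z. ennreal (gd z * indicator E (z + u)) \<partial>lborel)" by simp
    also have "\<dots> \<le> ennreal \<delta>'"
    proof (cases "u = 0")
      case True
      then have "E = {}" using eta by (auto simp: E_def)
      then show ?thesis by simp
    next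
      case False
      define t where "t = \<eta> - (norm u)^2/2"
      define K where "K = exp (- (t^2) / (2 * (norm u)^2))"
      have t: "0 \<le> t" "K \<le> \<delta>'" using tail False unfolding t_def K_def u_def by auto
      define s where "s = t / (norm u)^2"
      have nu: "(norm u)^2 > 0" using False by simp
      have s: "s \<ge> 0" using t nu by (simp add: s_def)
      have pw: "gd z * indicator E (z + u) \<le> gd (z - s *\<^sub>R u) * K" for z
      proof -
        have "gd (z - s *\<^sub>R u) * K = gd z * exp (s * (z \<bullet> u) - s^2 * (norm u)^2 / 2) * K"
          by (simp add: gd_shift power_mult_distrib)
        also have "\<dots> = gd z * exp (s * (z \<bullet> u - t))"
        proof -
          have "s^2 * (norm u)^2 / 2 = t^2 / (2 * (norm u)^2)" using nu by (simp add: s_def power2_eq_square field_simps)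
          moreover have "s * t = t^2 / (norm u)^2" by (simp add: s_def power2_eq_square)
          ultimately have "s * (z \<bullet> u) - s^2 * (norm u)^2 / 2 + (- (t^2) / (2 * (norm u)^2)) = s * (z \<bullet> u - t)"
            using nu by (simp add: field_simps)
          then show ?thesis by (simp add: K_def mult.assoc exp_add[symmetric])
        qed
        finally have eq: "gd (z - s *\<^sub>R u) * K = gd z * exp (s * (z \<bullet> u - t))" .
        show ?thesis
        proof (cases "z + u \<in> E")
          case True
          then have "z \<bullet> u > t" by (simp add: E_def t_def inner_add_left power2_norm_eq_inner)
          then have "1 \<le> exp (s * (z \<bullet> u - t))" using s by simp
          then have "gd z * 1 \<le> gd z * exp (s * (z \<bullet> u - t))" using gd_nonneg[of z] by (rule mult_left_mono)
          then show ?thesis unfolding eq using True by simp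
        next
          case False
          then show ?thesis unfolding eq using gd_nonneg[of z] by simp
        qed
      qed
      have "(\<integral>\<^sup>+z. ennreal (gd z * indicator E (z + u)) \<partial>lborel) \<le> (\<integral>\<^sup>+z. ennreal (gd (z - s *\<^sub>R u) * K) \<partial>lborel)"
        by (intro nn_integral_mono ennreal_leI pw)
      also have "\<dots> = (\<integral>\<^sup>+z. ennreal (gd (z + (- (s *\<^sub>R u)))) * ennreal K \<partial>lborel)"
        by (intro nn_integral_cong) (simp only: ennreal_mult[OF gd_nonneg less_imp_le[OF exp_gt_zero]] K_def diff_conv_add_uminus)
      also have "\<dots> = (\<integral>\<^sup>+z. ennreal (gd (z + (- (s *\<^sub>R u)))) \<partial>lborel) * ennreal K"
        by (rule nn_integral_multc) measurable
      also have "(\<integral>\<^sup>+z. ennreal (gd (z + (- (s *\<^sub>R u)))) \<partial>lborel) = 1"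
        using nn_translate[of "\<lambda>z. ennreal (gd z)" "- (s *\<^sub>R u)"] gd_int by simp
      finally have "(\<integral>\<^sup>+z. ennreal (gd z * indicator E (z + u)) \<partial>lborel) \<le> ennreal K" by simp
      then show ?thesis using ennreal_leI[OF t(2)] by (rule order_trans)
    qed
    finally show ?thesis .
  qed
  finally show ?thesis by (simp add: add_left_mono)
qed



lemma gauss_prob_distr: "prob_space (distr std_gauss borel (\<lambda>z::real^'q. m + \<sigma> *\<^sub>R z))"
proof -
  have meas: "(\<lambda>z::real^'q. m + \<sigma> *\<^sub>R z) \<in> measurable std_gauss borel"
    using affine_meas by (simp add: measurable_cong_sets[OF sets_std_gauss refl])
  show ?thesis by (rule prob_space.prob_space_distr[OF std_gauss_prob meas])
qed

lemma gauss_bound_real: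
  fixes m1 m2 :: "real^'q"
  assumes sig: "\<sigma> > 0" and eta: "\<eta> \<ge> 0" and dl: "\<delta>' \<ge> 0" and B: "B \<in> sets borel"
    and tail: "(1/\<sigma>) *\<^sub>R (m1 - m2) \<noteq> 0 \<Longrightarrow>
        0 \<le> \<eta> - (norm ((1/\<sigma>) *\<^sub>R (m1 - m2)))^2/2 \<and>
        exp (- ((\<eta> - (norm ((1/\<sigma>) *\<^sub>R (m1 - m2)))^2/2)^2) / (2 * (norm ((1/\<sigma>) *\<^sub>R (m1 - m2)))^2)) \<le> \<delta>'"
  shows "measure (distr std_gauss borel (\<lambda>z. m1 + \<sigma> *\<^sub>R z)) B
     \<le> exp \<eta> * measure (distr std_gauss borel (\<lambda>z. m2 + \<sigma> *\<^sub>R z)) B + \<delta>'"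
proof -
  interpret P1: prob_space "distr std_gauss borel (\<lambda>z. m1 + \<sigma> *\<^sub>R z)" by (rule gauss_prob_distr)
  interpret P2: prob_space "distr std_gauss borel (\<lambda>z. m2 + \<sigma> *\<^sub>R z)" by (rule gauss_prob_distr)
  have "ennreal (measure (distr std_gauss borel (\<lambda>z. m1 + \<sigma> *\<^sub>R z)) B)
     \<le> ennreal (exp \<eta>) * ennreal (measure (distr std_gauss borel (\<lambda>z. m2 + \<sigma> *\<^sub>R z)) B) + ennreal \<delta>'"
    using gauss_bound[OF sig eta dl B tail] by (simp add: P1.emeasure_eq_measure P2.emeasure_eq_measure)
  also have "\<dots> = ennreal (exp \<eta> * measure (distr std_gauss borel (\<lambda>z. m2 + \<sigma> *\<^sub>R z)) B + \<delta>')"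
    using dl by (simp add: ennreal_plus ennreal_mult)
  finally show ?thesis using dl by (subst (asm) ennreal_le_iff) auto
qed

lemma tail_num:
  fixes \<epsilon> \<delta> \<alpha> a :: real
  assumes e: "0 < \<epsilon>" "\<epsilon> < 2" and d: "0 < \<delta>" "\<delta> < 1" and al: "\<alpha> > 0"
    and a: "0 < a" "a \<le> \<alpha> / ((2 * \<alpha> / \<epsilon>) * sqrt (2 * ln (1.25 / \<delta>)))"
  shows "0 \<le> 3*\<epsilon>/4 - a^2/2 \<and> exp (- ((3*\<epsilon>/4 - a^2/2)^2) / (2 * a^2)) \<le> \<delta>"
proof -
  define L where "L = ln (1.25::real)"
  have L: "L \<ge> 1/5"
  proof -
    have "ln (0.8::real) \<le> 0.8 - 1" by (rule ln_le_minus_one) simp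
    moreover have "ln (0.8::real) = - L" unfolding L_def by (simp add: ln_div[symmetric] ln_inverse[symmetric])
    ultimately show ?thesis by simp
  qed
  define x where "x = 2 * ln (1.25 / \<delta>)"
  have lnd: "ln (1.25 / \<delta>) = L - ln \<delta>" unfolding L_def using d by (intro ln_divide_pos) auto
  have lnd0: "ln \<delta> < 0" using d by simp
  have x: "x > 0.4" using L lnd lnd0 by (simp add: x_def)
  define c where "c = sqrt x"
  have c: "c > 0" "c^2 = x" using x by (auto simp: c_def)
  have ac: "a \<le> \<epsilon> / (2 * c)"
    using a(2) al e by (simp add: c_def x_def field_simps)
  define r where "r = (3*\<epsilon>/4) / a - a / 2"
  have r1: "(3*\<epsilon>/4) / a \<ge> 1.5 * c"
  proof -
    have "3*\<epsilon>/4 / (\<epsilon> / (2 * c)) \<le> (3*\<epsilon>/4) / a"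
      using ac a(1) e c(1) by (intro divide_left_mono) (auto intro!: mult_pos_pos divide_pos_pos)
    moreover have "3*\<epsilon>/4 / (\<epsilon> / (2 * c)) = 1.5 * c" using e c by (simp add: field_simps)
    ultimately show ?thesis by simp
  qed
  have r2: "a / 2 \<le> 1 / (2 * c)"
  proof -
    have "a / 2 \<le> \<epsilon> / (4 * c)" using ac by (simp add: field_simps)
    also have "\<dots> \<le> 2 / (4 * c)" using e c by (intro divide_right_mono) auto
    finally show ?thesis by simp
  qed
  define r0 where "r0 = 1.5 * c - 1 / (2 * c)"
  have rr0: "r \<ge> r0" using r1 r2 by (simp add: r_def r0_def)
  have r0pos: "r0 \<ge> 0"
  proof -
    have cc: "c * c = x" using c(2) by (simp add: power2_eq_square)
    have "r0 = (3 * (c * c) - 1) / (2 * c)" using c(1) by (simp add: r0_def field_simps)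
    also have "\<dots> \<ge> 0" using c(1) x unfolding cc by (intro divide_nonneg_pos) auto
    finally show ?thesis .
  qed
  have r0sq: "r0^2 \<ge> x - 2 * L"
  proof -
    have cc: "c * c = x" using c(2) by (simp add: power2_eq_square)
    have "r0^2 = 9/4 * (c * c) - 3/2 + 1 / (4 * (c * c))"
      using c(1) by (simp add: r0_def power2_eq_square field_simps)
    then have "r0^2 = 9/4 * x - 3/2 + 1 / (4 * x)" unfolding cc .
    moreover have "5/4 * x - 11/10 + 1 / (4 * x) \<ge> 0"
    proof -
      have P: "0 \<le> 1.25 * x^2 - 1.1 * x + 0.25"
      proof -
        have "0 \<le> 1.25 * (x - 0.44)^2 + 0.008" by simp
        also have "1.25 * (x - 0.44)^2 + 0.008 = 1.25 * x^2 - 1.1 * x + 0.25"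
          by (simp add: power2_eq_square algebra_simps)
        finally show ?thesis .
      qed
      have "(5/4 * x - 11/10 + 1 / (4 * x)) * (4 * x) = 4 * (1.25 * x^2 - 1.1 * x + 0.25)"
        using x by (simp add: distrib_right power2_eq_square) (simp add: algebra_simps)
      then have "0 \<le> (5/4 * x - 11/10 + 1 / (4 * x)) * (4 * x)" using P by simp
      then show ?thesis using x by (simp add: zero_le_mult_iff)
    qed
    ultimately show ?thesis using L by linarith
  qed
  have rpos: "r \<ge> 0" using rr0 r0pos by linarith
  have eq1: "3*\<epsilon>/4 - a^2/2 = a * r" using a(1) by (simp add: r_def field_simps power2_eq_square)
  have eq2: "(3*\<epsilon>/4 - a^2/2)^2 / (2 * a^2) = r^2 / 2" using a(1) unfolding eq1 by (simp add: power_mult_distrib)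
  have "r0^2 \<le> r^2" using rr0 r0pos by (intro power_mono) auto
  moreover have "x = 2 * L - 2 * ln \<delta>" unfolding x_def lnd by simp
  ultimately have "- (r^2) \<le> 2 * ln \<delta>" using r0sq by linarith
  then have "- (r^2 / 2) \<le> ln \<delta>" by simp
  then have "exp (- (r^2 / 2)) \<le> exp (ln \<delta>)" by (simp only: exp_le_cancel_iff)
  also have "exp (ln \<delta>) = \<delta>" using d(1) by (rule exp_ln)
  also have "- (r^2 / 2) = - ((3*\<epsilon>/4 - a^2/2)^2) / (2 * a^2)" unfolding eq2[symmetric] by (rule minus_divide_left)
  finally have "exp (- ((3*\<epsilon>/4 - a^2/2)^2) / (2 * a^2)) \<le> \<delta>" .
  moreover have "0 \<le> 3*\<epsilon>/4 - a^2/2" unfolding eq1 using a(1) rpos by simp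
  ultimately show ?thesis by blast
qed



lemma ePTR_prob_bounds: "0 \<le> ePTR_prob \<epsilon> \<delta> g" "ePTR_prob \<epsilon> \<delta> g \<le> 1"
  unfolding ePTR_prob_def by (auto simp: field_simps add_pos_pos)

lemma ePTR_meas:
  fixes \<theta> :: "'d \<Rightarrow> real^'q"
  assumes pi: "prob_space \<pi>" and spi: "sets \<pi> = sets borel" and B: "B \<in> sets borel"
  shows "sets (ePTR \<theta> \<alpha> \<gamma> \<epsilon> \<delta> \<pi> D) = sets borel"
    and "measure (ePTR \<theta> \<alpha> \<gamma> \<epsilon> \<delta> \<pi> D) B
       = ePTR_prob \<epsilon> \<delta> (\<gamma> D) * measure (distr std_gauss borel (\<lambda>z. \<theta> D + ((2 * \<alpha> / \<epsilon>) * sqrt (2 * ln (1.25 / \<delta>))) *\<^sub>R z)) B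
         + (1 - ePTR_prob \<epsilon> \<delta> (\<gamma> D)) * measure \<pi> B"
proof -
  define P where "P = ePTR_prob \<epsilon> \<delta> (\<gamma> D)"
  define G where "G = distr std_gauss borel (\<lambda>z. \<theta> D + ((2 * \<alpha> / \<epsilon>) * sqrt (2 * ln (1.25 / \<delta>))) *\<^sub>R z)"
  define K where "K = (\<lambda>I. if I then G else \<pi>)"
  have P: "0 \<le> P" "P \<le> 1" unfolding P_def by (rule ePTR_prob_bounds)+
  have E: "ePTR \<theta> \<alpha> \<gamma> \<epsilon> \<delta> \<pi> D = bind (measure_pmf (bernoulli_pmf P)) K"
    unfolding ePTR_def P_def K_def G_def by simp
  interpret G: prob_space G unfolding G_def by (rule gauss_prob_distr)
  interpret pi: prob_space \<pi> by (rule pi)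
  have sG: "sets G = sets borel" by (simp add: G_def)
  have sK: "sets (K x) = sets borel" for x by (simp add: K_def sG spi)
  have Kmeas: "K \<in> measurable (measure_pmf (bernoulli_pmf P)) (subprob_algebra borel)"
    using sK by (auto simp: space_subprob_algebra K_def G.subprob_space_axioms pi.subprob_space_axioms
        prob_space_imp_subprob_space G.prob_space_axioms pi.prob_space_axioms)
  show "sets (ePTR \<theta> \<alpha> \<gamma> \<epsilon> \<delta> \<pi> D) = sets borel"
    unfolding E by (rule sets_bind) (auto simp: sK)
  have "emeasure (ePTR \<theta> \<alpha> \<gamma> \<epsilon> \<delta> \<pi> D) B = (\<integral>\<^sup>+x. emeasure (K x) B \<partial>measure_pmf (bernoulli_pmf P))"
    unfolding E by (rule emeasure_bind[OF _ Kmeas B]) simp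
  also have "\<dots> = emeasure G B * ennreal P + emeasure \<pi> B * ennreal (1 - P)"
    using P by (simp add: K_def)
  also have "\<dots> = ennreal (measure G B * P + measure \<pi> B * (1 - P))"
  proof -
    have "ennreal (measure G B * P + measure \<pi> B * (1 - P)) = ennreal (measure G B * P) + ennreal (measure \<pi> B * (1 - P))"
      using P by (intro ennreal_plus) auto
    also have "\<dots> = ennreal (measure G B) * ennreal P + ennreal (measure \<pi> B) * ennreal (1 - P)"
      using P by (simp add: ennreal_mult)
    also have "\<dots> = emeasure G B * ennreal P + emeasure \<pi> B * ennreal (1 - P)"
      by (simp only: G.emeasure_eq_measure pi.emeasure_eq_measure)
    finally show ?thesis by (rule sym)
  qed
  finally have eqE: "emeasure (ePTR \<theta> \<alpha> \<gamma> \<epsilon> \<delta> \<pi> D) B = ennreal (measure G B * P + measure \<pi> B * (1 - P))" .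
  have "measure (ePTR \<theta> \<alpha> \<gamma> \<epsilon> \<delta> \<pi> D) B = measure G B * P + measure \<pi> B * (1 - P)"
    unfolding measure_def eqE using P by (intro enn2real_ennreal add_nonneg_nonneg mult_nonneg_nonneg) auto
  then show "measure (ePTR \<theta> \<alpha> \<gamma> \<epsilon> \<delta> \<pi> D) B
       = ePTR_prob \<epsilon> \<delta> (\<gamma> D) * measure (distr std_gauss borel (\<lambda>z. \<theta> D + ((2 * \<alpha> / \<epsilon>) * sqrt (2 * ln (1.25 / \<delta>))) *\<^sub>R z)) B
         + (1 - ePTR_prob \<epsilon> \<delta> (\<gamma> D)) * measure \<pi> B"
    by (simp add: P_def G_def mult.commute)
qed

definition sg :: "real \<Rightarrow> real" where "sg a = exp a / (exp a + 1)"

lemma sg_ratio: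
  assumes "\<bar>a - b\<bar> \<le> d"
  shows "sg a \<le> exp d * sg b" "1 - sg a \<le> exp d * (1 - sg b)"
proof -
  have d: "d \<ge> 0" using assms by linarith
  have pa: "exp a + 1 > 0" "exp b + 1 > 0" by (simp_all add: add_pos_pos)
  have h1: "exp a \<le> exp (b + d)" using assms by simp
  have h2: "exp a * exp b \<le> exp a * exp (b + d)" using d by (intro mult_left_mono) auto
  have key: "exp a * (exp b + 1) \<le> exp (b + d) * (exp a + 1)"
  proof -
    have "exp a * (exp b + 1) = exp a * exp b + exp a" by (simp add: distrib_left)
    moreover have "exp (b + d) * (exp a + 1) = exp a * exp (b + d) + exp (b + d)" by (simp add: algebra_simps)
    ultimately show ?thesis using h1 h2 by linarith
  qed
  have "sg a = (exp a * (exp b + 1)) / ((exp a + 1) * (exp b + 1))" unfolding sg_def using pa by simp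
  also have "\<dots> \<le> (exp (b + d) * (exp a + 1)) / ((exp a + 1) * (exp b + 1))"
    using key pa by (intro divide_right_mono) auto
  also have "\<dots> = exp d * sg b" unfolding sg_def using pa by (simp add: exp_add)
  finally show "sg a \<le> exp d * sg b" .
  have "exp b \<le> exp (d + a)" using assms by simp
  moreover have "1 \<le> exp d" using d by simp
  moreover have "exp (d + a) = exp d * exp a" by (rule exp_add)
  moreover have "exp d * (exp a + 1) = exp d * exp a + exp d" by (simp add: distrib_left)
  ultimately have "exp b + 1 \<le> exp d * (exp a + 1)" by linarith
  then show "1 - sg a \<le> exp d * (1 - sg b)" unfolding sg_def using pa
    by (simp add: divide_simps)
qed

lemma sg_le_exp: "sg a \<le> exp a"
  unfolding sg_def by (simp add: divide_simps add_pos_pos)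

lemma ePTR_prob_sg: "ePTR_prob \<epsilon> \<delta> g = sg (\<epsilon> / 2 * (g - ePTR_M \<epsilon> \<delta>))"
  by (simp add: ePTR_prob_def sg_def)

lemma prob_small:
  assumes "0 < \<epsilon>" "0 < \<delta>"
  shows "ePTR_prob \<epsilon> \<delta> 0 \<le> \<delta>"
proof -
  define m where "m = max (1/\<delta>) (1/\<epsilon>)"
  have "1/\<delta> > 0" using assms by simp
  then have m: "m > 0" "m \<ge> 1/\<delta>" unfolding m_def by (auto simp: less_max_iff_disj)
  have "\<epsilon> / 2 * (0 - ePTR_M \<epsilon> \<delta>) = - (\<epsilon>/2) - ln m"
    using assms by (simp add: ePTR_M_def m_def field_simps)
  then have "ePTR_prob \<epsilon> \<delta> 0 \<le> exp (- (\<epsilon>/2) - ln m)"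
    using sg_le_exp by (simp add: ePTR_prob_sg)
  also have "\<dots> = exp (- (\<epsilon>/2)) / m" using m by (simp add: exp_diff)
  also have "\<dots> \<le> 1 / m" using m assms by (intro divide_right_mono) auto
  also have "\<dots> \<le> \<delta>" using m assms by (simp add: field_simps)
  finally show ?thesis .
qed



lemma combine_pos:
  fixes P P' g1 g2 w e :: real
  assumes "0 \<le> P" "P \<le> 1" "0 \<le> P'" "P' \<le> 1" "0 \<le> g1" "0 \<le> g2" "0 \<le> w" "0 \<le> e" "0 \<le> \<delta>"
    and "P \<le> exp (e/4) * P'" "1 - P \<le> exp (e/4) * (1 - P')"
    and "g1 \<le> exp (3*e/4) * g2 + \<delta>"
  shows "P * g1 + (1 - P) * w \<le> exp e * (P' * g2 + (1 - P') * w) + \<delta>"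
proof -
  have c1: "P * g1 \<le> P * (exp (3*e/4) * g2 + \<delta>)" using assms by (intro mult_left_mono) auto
  have c2: "P * (exp (3*e/4) * g2) \<le> (exp (e/4) * P') * (exp (3*e/4) * g2)"
    using assms by (intro mult_right_mono) auto
  have c3: "P * \<delta> \<le> \<delta>" using assms by (simp add: mult_left_le_one_le)
  have c4: "(1 - P) * w \<le> (exp (e/4) * (1 - P')) * w" using assms by (intro mult_right_mono) auto
  have c5: "(exp (e/4) * (1 - P')) * w \<le> (exp e * (1 - P')) * w"
    using assms by (intro mult_right_mono) auto
  have ee: "exp (e/4) * exp (3*e/4) = exp e" by (simp add: exp_add[symmetric])
  have c6: "(exp (e/4) * P') * (exp (3*e/4) * g2) = exp e * (P' * g2)"
    using ee by (metis mult.assoc mult.left_commute)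
  have c7: "exp e * (P' * g2 + (1 - P') * w) = exp e * (P' * g2) + (exp e * (1 - P')) * w"
    by (simp add: algebra_simps)
  have c8: "P * (exp (3*e/4) * g2 + \<delta>) = P * (exp (3*e/4) * g2) + P * \<delta>" by (simp add: algebra_simps)
  show ?thesis using c1 c2 c3 c4 c5 c6 c7 c8 by linarith
qed

lemma combine_zero:
  fixes P P' g1 g2 w e :: real
  assumes "0 \<le> P" "P \<le> 1" "0 \<le> P'" "P' \<le> 1" "0 \<le> g1" "g1 \<le> 1" "0 \<le> g2" "0 \<le> w" "0 \<le> e"
    and "P \<le> \<delta>" "1 - P \<le> exp (e/4) * (1 - P')"
  shows "P * g1 + (1 - P) * w \<le> exp e * (P' * g2 + (1 - P') * w) + \<delta>"
proof -
  have c1: "P * g1 \<le> P" using assms by (simp add: mult_left_le)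
  have c4: "(1 - P) * w \<le> (exp (e/4) * (1 - P')) * w" using assms by (intro mult_right_mono) auto
  have c5: "(exp (e/4) * (1 - P')) * w \<le> (exp e * (1 - P')) * w"
    using assms by (intro mult_right_mono) auto
  have c6: "0 \<le> exp e * (P' * g2)" using assms by simp
  have c7: "exp e * (P' * g2 + (1 - P') * w) = exp e * (P' * g2) + (exp e * (1 - P')) * w"
    by (simp add: algebra_simps)
  show ?thesis using assms c1 c4 c5 c6 c7 by linarith
qed

theorem theorem5:
  fixes n :: nat and Rx R\<theta> c0 \<epsilon> \<delta> :: real and \<pi>perp :: "(real^'p) measure"
  assumes "n \<ge> 1" and "Rx > 0" and "R\<theta> > 0" and "c0 > 0"
    and "0 < \<epsilon>" and "\<epsilon> < 2" and "0 < \<delta>" and "\<delta> < 1"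
    and "prob_space \<pi>perp" and "sets \<pi>perp = sets borel"
  shows "is_DP \<epsilon> \<delta> n (ePTR_linreg n Rx R\<theta> c0 \<epsilon> \<delta> \<pi>perp)"
proof -
  note n = assms(1) and Rx = assms(2) and Rt = assms(3) and c0 = assms(4)
    and e = assms(5,6) and d = assms(7,8) and pi = assms(9) and spi = assms(10)
  interpret pi: prob_space \<pi>perp by (rule pi)
  define \<alpha> where "\<alpha> = 8 * Rx^2 * R\<theta> / (real n * c0)"
  define \<sigma> where "\<sigma> = (2 * \<alpha> / \<epsilon>) * sqrt (2 * ln (1.25 / \<delta>))"
  define A where "A = ePTR_linreg n Rx R\<theta> c0 \<epsilon> \<delta> \<pi>perp"
  have A_eq: "A = ePTR (theta_hat Rx R\<theta>) \<alpha> (gamma_lr Rx R\<theta> c0) \<epsilon> \<delta> \<pi>perp"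
    by (simp add: A_def ePTR_linreg_def \<alpha>_def)
  have npos: "real n > 0" using n by simp
  have al: "\<alpha> > 0" using Rx Rt c0 npos by (simp add: \<alpha>_def)
  have lnpos: "ln (1.25 / \<delta>) > 0" using d by simp
  have sig: "\<sigma> > 0" using al e lnpos by (simp add: \<sigma>_def)
  show ?thesis unfolding is_DP_def A_def[symmetric]
  proof (intro allI impI ballI)
    fix D D' :: "((real^'p) \<times> real) list" and B
    assume lenD: "length D = n" and nb: "neighbors D D'" and B0: "B \<in> sets (A D)"
    have len': "length D' = n" using nb lenD by (simp add: neighbors_def)
    have "card {i. i < length D \<and> D ! i \<noteq> D' ! i} = 1" using nb unfolding neighbors_def hamming_def by (elim conjE)
    then obtain k where kS: "{i. i < length D \<and> D ! i \<noteq> D' ! i} = {k}" by (rule card_1_singletonE)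
    have k: "k < length D" using kS by blast
    have same: "D ! i = D' ! i" if "i < length D" "i \<noteq> k" for i
      using kS that by blast
    have D'eq: "D' = D[k := D' ! k]"
    proof (rule nth_equalityI)
      show "length D' = length (D[k := D' ! k])" using lenD len' by simp
      fix i assume "i < length D'"
      then have i: "i < length D" using lenD len' by simp
      show "D' ! i = D[k := D' ! k] ! i"
      proof (cases "i = k")
        case True then show ?thesis using k by simp
      next
        case False then show ?thesis using same[OF i False] by simp
      qed
    qed
    define C where "C = clip_data Rx R\<theta> D"
    define a where "a = (clipR Rx (fst (D' ! k)), clipR (Rx * R\<theta>) (snd (D' ! k)))"
    have C'eq: "clip_data Rx R\<theta> D' = C[k := a]"
      unfolding C_def a_def clip_data_def by (subst D'eq) (simp add: map_update split_beta)
    have kC: "k < length C" using k by (simp add: C_def clip_data_def)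
    have lenC: "length C = n" using lenD by (simp add: C_def clip_data_def)
    have bC: "\<And>c. c \<in> set C \<Longrightarrow> bdd Rx R\<theta> c" unfolding C_def using Rx Rt by (rule clip_bdd)
    have ba: "bdd Rx R\<theta> a" unfolding bdd_def a_def
      using clipR_norm[OF Rx, of "fst (D'!k)"] clipR_norm[of "Rx * R\<theta>" "snd (D'!k)"] Rx Rt by simp
    have bk: "norm (fst (C ! k)) \<le> Rx" using bC[OF nth_mem[OF kC]] by (simp add: bdd_def)
    have bk': "norm (fst (C[k := a] ! k)) \<le> Rx" using ba kC by (simp add: bdd_def)
    define l where "l = lambda_min (gram C)"
    define l' where "l' = lambda_min (gram (C[k := a]))"
    have l1: "l - Rx^2 \<le> l'" unfolding l_def l'_def by (rule lmin_upd[OF kC bk])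
    have l2: "l' - Rx^2 \<le> l"
    proof -
      have "l' - Rx^2 \<le> lambda_min (gram ((C[k := a])[k := C ! k]))"
        unfolding l'_def by (rule lmin_upd) (use kC bk' in auto)
      also have "(C[k := a])[k := C ! k] = C" by simp
      finally show ?thesis by (simp add: l_def)
    qed
    define K where "K = c0 * real n + 2 * Rx^2"
    have gD: "gamma_lr Rx R\<theta> c0 D = (1 / (2 * Rx^2)) * max (l - K) 0"
      by (simp add: gamma_lr_def Let_def C_def[symmetric] l_def lenD K_def algebra_simps)
    have gD': "gamma_lr Rx R\<theta> c0 D' = (1 / (2 * Rx^2)) * max (l' - K) 0"
      by (simp add: gamma_lr_def Let_def C'eq l'_def len' K_def algebra_simps)
    have hg: "\<bar>gamma_lr Rx R\<theta> c0 D - gamma_lr Rx R\<theta> c0 D'\<bar> \<le> 1/2"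
    proof -
      have "\<bar>max (l - K) 0 - max (l' - K) 0\<bar> \<le> Rx^2" using l1 l2 by (simp add: max_def abs_le_iff)
      then have "(1 / (2 * Rx^2)) * \<bar>max (l - K) 0 - max (l' - K) 0\<bar> \<le> (1 / (2 * Rx^2)) * Rx^2"
        using Rx by (intro mult_left_mono) auto
      also have "\<dots> = 1/2" using Rx by simp
      finally have fin: "(1 / (2 * Rx^2)) * \<bar>max (l - K) 0 - max (l' - K) 0\<bar> \<le> 1/2" .
      have "gamma_lr Rx R\<theta> c0 D - gamma_lr Rx R\<theta> c0 D' = (1 / (2 * Rx^2)) * (max (l - K) 0 - max (l' - K) 0)"
        unfolding gD gD' by (simp only: right_diff_distrib)
      then have "\<bar>gamma_lr Rx R\<theta> c0 D - gamma_lr Rx R\<theta> c0 D'\<bar> = (1 / (2 * Rx^2)) * \<bar>max (l - K) 0 - max (l' - K) 0\<bar>"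
        using Rx by (simp only: abs_mult) simp
      then show ?thesis using fin by simp
    qed
    define P where "P = ePTR_prob \<epsilon> \<delta> (gamma_lr Rx R\<theta> c0 D)"
    define P' where "P' = ePTR_prob \<epsilon> \<delta> (gamma_lr Rx R\<theta> c0 D')"
    have Pb: "0 \<le> P" "P \<le> 1" "0 \<le> P'" "P' \<le> 1" unfolding P_def P'_def by (rule ePTR_prob_bounds)+
    have hd: "\<bar>\<epsilon> / 2 * (gamma_lr Rx R\<theta> c0 D - ePTR_M \<epsilon> \<delta>) - \<epsilon> / 2 * (gamma_lr Rx R\<theta> c0 D' - ePTR_M \<epsilon> \<delta>)\<bar> \<le> \<epsilon>/4"
    proof -
      have "\<bar>\<epsilon> / 2 * (gamma_lr Rx R\<theta> c0 D - ePTR_M \<epsilon> \<delta>) - \<epsilon> / 2 * (gamma_lr Rx R\<theta> c0 D' - ePTR_M \<epsilon> \<delta>)\<bar>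
          = \<epsilon> / 2 * \<bar>gamma_lr Rx R\<theta> c0 D - gamma_lr Rx R\<theta> c0 D'\<bar>"
      proof -
        have "\<epsilon> / 2 * (gamma_lr Rx R\<theta> c0 D - ePTR_M \<epsilon> \<delta>) - \<epsilon> / 2 * (gamma_lr Rx R\<theta> c0 D' - ePTR_M \<epsilon> \<delta>)
          = \<epsilon> / 2 * (gamma_lr Rx R\<theta> c0 D - gamma_lr Rx R\<theta> c0 D')" by (simp add: algebra_simps)
        then show ?thesis using e by (simp only: abs_mult)
      qed
      also have "\<dots> \<le> \<epsilon> / 2 * (1/2)" using hg e by (intro mult_left_mono) auto
      finally show ?thesis by simp
    qed
    have PP: "P \<le> exp (\<epsilon>/4) * P'" "1 - P \<le> exp (\<epsilon>/4) * (1 - P')"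
      unfolding P_def P'_def ePTR_prob_sg using sg_ratio[OF hd] by auto
    have sA: "sets (A D) = sets borel" unfolding A_eq by (rule ePTR_meas(1)[OF pi spi sets.top])
    have B: "B \<in> sets borel" using B0 sA by simp
    define g1 where "g1 = measure (distr std_gauss borel (\<lambda>z. theta_hat Rx R\<theta> D + \<sigma> *\<^sub>R z)) B"
    define g2 where "g2 = measure (distr std_gauss borel (\<lambda>z. theta_hat Rx R\<theta> D' + \<sigma> *\<^sub>R z)) B"
    define w where "w = measure \<pi>perp B"
    have mD: "measure (A D) B = P * g1 + (1 - P) * w"
      unfolding A_eq P_def g1_def w_def \<sigma>_def by (rule ePTR_meas(2)[OF pi spi B])
    have mD': "measure (A D') B = P' * g2 + (1 - P') * w"
      unfolding A_eq P'_def g2_def w_def \<sigma>_def by (rule ePTR_meas(2)[OF pi spi B])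
    interpret G1: prob_space "distr std_gauss borel (\<lambda>z. theta_hat Rx R\<theta> D + \<sigma> *\<^sub>R z)" by (rule gauss_prob_distr)
    have gb: "0 \<le> g1" "g1 \<le> 1" "0 \<le> g2" "0 \<le> w" by (simp_all add: g1_def g2_def w_def G1.prob_le_1)
    have ee: "0 \<le> \<epsilon>" "0 \<le> \<delta>" using e d by auto
    show "measure (A D) B \<le> exp \<epsilon> * measure (A D') B + \<delta>"
    proof (cases "l - K > 0")
      case True
      define L where "L = c0 * real n"
      have R2: "0 \<le> Rx^2" by simp
      have L1: "L > 0" using c0 npos by (simp add: L_def)
      have L2: "L \<le> l" using True R2 unfolding L_def K_def by linarith
      note L = L1 L2
      have pos': "l' > 0" using True l1 R2 L1 unfolding K_def L_def by linarith
      have sens: "norm (thc R\<theta> C - thc R\<theta> (C[k := a])) \<le> 8 * Rx^2 * R\<theta> / L"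
        by (rule sensitivity[OF Rx Rt kC bC ba L(1)]) (use L pos' in \<open>simp_all add: l_def l'_def\<close>)
      have dist: "norm (theta_hat Rx R\<theta> D - theta_hat Rx R\<theta> D') \<le> \<alpha>"
        using sens by (simp add: theta_hat_thc C_def[symmetric] C'eq \<alpha>_def L_def mult.commute)
      have g12: "g1 \<le> exp (3*\<epsilon>/4) * g2 + \<delta>"
        unfolding g1_def g2_def
      proof (rule gauss_bound_real[OF sig _ ee(2) B])
        show "0 \<le> 3*\<epsilon>/4" using e by simp
        assume u: "(1/\<sigma>) *\<^sub>R (theta_hat Rx R\<theta> D - theta_hat Rx R\<theta> D') \<noteq> 0"
        define aa where "aa = norm ((1/\<sigma>) *\<^sub>R (theta_hat Rx R\<theta> D - theta_hat Rx R\<theta> D'))"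
        have aa: "0 < aa" using u by (simp add: aa_def)
        have "aa = norm (theta_hat Rx R\<theta> D - theta_hat Rx R\<theta> D') / \<sigma>" using sig by (simp add: aa_def)
        also have "\<dots> \<le> \<alpha> / \<sigma>" using dist sig by (intro divide_right_mono) auto
        finally have "aa \<le> \<alpha> / ((2 * \<alpha> / \<epsilon>) * sqrt (2 * ln (1.25 / \<delta>)))" by (simp add: \<sigma>_def)
        from tail_num[OF e d al aa this]
        show "0 \<le> 3*\<epsilon>/4 - (norm ((1/\<sigma>) *\<^sub>R (theta_hat Rx R\<theta> D - theta_hat Rx R\<theta> D')))^2/2 \<and>
          exp (- ((3*\<epsilon>/4 - (norm ((1/\<sigma>) *\<^sub>R (theta_hat Rx R\<theta> D - theta_hat Rx R\<theta> D')))^2/2)^2) /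
            (2 * (norm ((1/\<sigma>) *\<^sub>R (theta_hat Rx R\<theta> D - theta_hat Rx R\<theta> D')))^2)) \<le> \<delta>"
          unfolding aa_def .
      qed
      show ?thesis unfolding mD mD'
        by (rule combine_pos[OF Pb gb(1,3,4) ee PP g12])
    next
      case False
      then have "gamma_lr Rx R\<theta> c0 D = 0" unfolding gD by simp
      then have "P \<le> \<delta>" unfolding P_def using prob_small e d by simp
      then show ?thesis unfolding mD mD'
        by (rule combine_zero[OF Pb gb ee(1) _ PP(2)])
    qed
  qed
qed


end
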